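(* Assume $n_1,n_2\in(0,4)$ and (IE). Then there exists a bounded function $m:(0,\infty)\to\mathbb{R}$ such that for all $\varepsilon\in(0,1)$, $$\int_\Omega u_\varepsilon(\cdot,t)+\int_\Omega v_\varepsilon(\cdot,t)\le m(t)\qquad\text{for all }t\in(0,T_{max,\varepsilon}),$$ and such that $$\limsup_{t\to\infty}m(t)\le m_\infty:=\frac{|\Omega|}{2}\Big(\lambda_1+\frac{1}{2\sqrt3}+1+\max\{a_1^2,1\}\frac{a_2}{2\sqrt3}\Big)^2+\frac{|\Omega|}{2}\Big(\lambda_2+\frac{1}{2\sqrt3}+1\Big)^2\max\{a_1^2,1\}.$$
   Context: Let $\Omega\subset\mathbb{R}$ be a bounded open interval, $D_i,a_i,\lambda_i,\chi_i>0$ ($i=1,2$), and fix $\alpha\in(0,\frac12]$. Assumption (IE): $u_0,v_0\in W^{1,2}(\Omega)$ with $u_0>0,v_0>0$ in $\overline\Omega$; for each $\varepsilon\in(0,1)$, $u_{0\varepsilon},v_{0\varepsilon}\in C^5(\overline\Omega)$ with $u_{0\varepsilon x}=u_{0\varepsilon xxx}=v_{0\varepsilon x}=v_{0\varepsilon xxx}=0$ on $\partial\Omega$; $\frac12\inf_\Omega u_0\le u_{0\varepsilon}\le u_0+1$, $\frac12\inf_\Omega v_0\le v_{0\varepsilon}\le v_0+1$ in $\Omega$; $\int_\Omega u_{0\varepsilon x}^2\le\int_\Omega u_{0x}^2+1$, $\int_\Omega v_{0\varepsilon x}^2\le\int_\Omega v_{0x}^2+1$; $u_{0\varepsilon}\to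 u_0$, $v_{0\varepsilon}\to v_0$ a.e. as $\varepsilon\searrow0$. Approximating problem: $u_t=-\varepsilon\big(\frac{u^4}{u^{4-n_1}+\varepsilon}u_{xxx}\big)_x+\varepsilon^{\alpha/2}(u^{-\alpha}u_x)_x+D_1u_{xx}-\chi_1\big(\frac{u^{5-n_1}}{u^{4-n_1}+\varepsilon}v_x\big)_x+\frac{3u^3}{3u^2+\varepsilon}(\lambda_1-u+a_1v)$, $v_t=-\varepsilon\big(\frac{v^4}{v^{4-n_2}+\varepsilon}v_{xxx}\big)_x+\varepsilon^{\alpha/2}(v^{-\alpha}v_x)_x+D_2v_{xx}+\chi_2\big(\frac{v^{5-n_2}}{v^{4-n_2}+\varepsilon}u_x\big)_x+\frac{3v^3}{3v^2+\varepsilon}(\lambda_2-v-a_2u)$ in $\Omega\times(0,\infty)$, $u_x=v_x=u_{xxx}=v_{xxx}=0$ on $\partial\Omega$, $u(\cdot,0)=u_{0\varepsilon}$, $v(\cdot,0)=v_{0\varepsilon}$. For $n_i\in(0,4)$ and each $\varepsilon$ it has a classical solution $(u_\varepsilon,v_\varepsilon)$, positive in $\overline\Omega\times[0,T_{max,\varepsilon})$, belonging to $\bigcap_{s\in(3/2,2)}C^0([0,T_{max,\varepsilon});W^{s,2}(\Omega))\cap C^{4,1}(\overline\Omega\times(0,T_{max,\varepsilon}))$, where $T_{max,\varepsilon}\in(0,\infty]$ is maximal: either $T_{max,\varepsilon}=\infty$ or $\limsup_{t\nearrow T_{max,\varepsilon}}\{\|u_\varepsilon(\cdot,t)\|_{W^{2,2}}+\|1/u_\varepsilon(\cdot,t)\|_{L^\infty}+\|v_\varepsilon(\cdot,t)\|_{W^{2,2}}+\|1/v_\varepsilon(\cdot,t)\|_{L^\infty}\}=\infty$.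 *)

theory Defs
  imports "HOL-Analysis.Analysis"
begin

text \<open>Omega is the open interval {xa<..<xb}, xa < xb.  Functions of (x,t) are
curried as f x t.  Derivative families: D k x t is the k-th x-derivative.\<close>

definition L2sq :: "real \<Rightarrow> real \<Rightarrow> (real \<Rightarrow> real) \<Rightarrow> ennreal" where
  "L2sq xa xb f = (\<integral>\<^sup>+ x. indicator {xa..xb} x * ennreal ((f x)\<^sup>2) \<partial>lborel)"

definition gag_sq :: "real \<Rightarrow> real \<Rightarrow> real \<Rightarrow> (real \<Rightarrow> real) \<Rightarrow> ennreal" where
  "gag_sq xa xb \<sigma> g = (\<integral>\<^sup>+ x. \<integral>\<^sup>+ y. indicator ({xa..xb} \<times> {xa..xb}) (x, y) *
      ennreal ((g x - g y)\<^sup>2 / \<bar>x - y\<bar> powr (1 + 2 * \<sigma>)) \<partial>lborel \<partial>lborel)"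

text \<open>Squared W^{s,2} norm, s in (1,2), of a function f with (classical/weak) derivative f'.\<close>
definition Ws_sq :: "real \<Rightarrow> real \<Rightarrow> real \<Rightarrow> (real \<Rightarrow> real) \<Rightarrow> (real \<Rightarrow> real) \<Rightarrow> ennreal" where
  "Ws_sq xa xb s f f' = L2sq xa xb f + L2sq xa xb f' + gag_sq xa xb (s - 1) f'"

text \<open>f is in W^{1,2}(xa,xb) with weak derivative g (absolutely continuous representative).\<close>
definition W12 :: "real \<Rightarrow> real \<Rightarrow> (real \<Rightarrow> real) \<Rightarrow> (real \<Rightarrow> real) \<Rightarrow> bool" where
  "W12 xa xb f g \<longleftrightarrow> set_integrable lborel {xa..xb} g \<and>
     set_integrable lborel {xa..xb} (\<lambda>x. (g x)\<^sup>2) \<and>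
     (\<forall>x\<in>{xa..xb}. f x = f xa + (LBINT y=xa..x. g y))"

definition Ck_fam :: "nat \<Rightarrow> real \<Rightarrow> real \<Rightarrow> (nat \<Rightarrow> real \<Rightarrow> real) \<Rightarrow> bool" where
  "Ck_fam k xa xb D \<longleftrightarrow>
     (\<forall>j<k. \<forall>x\<in>{xa..xb}. (D j has_real_derivative D (Suc j) x) (at x within {xa..xb})) \<and>
     (\<forall>j\<le>k. continuous_on {xa..xb} (D j))"

definition tcl :: "ereal \<Rightarrow> real set" where "tcl T = {t. 0 \<le> t \<and> ereal t < T}"
definition tpos :: "ereal \<Rightarrow> real set" where "tpos T = {t. 0 < t \<and> ereal t < T}"

text \<open>Approximate fluxes: u_t = (flux)_x + reaction.\<close>
definition flux_u :: "real \<Rightarrow> real \<Rightarrow> real \<Rightarrow> real \<Rightarrow> real \<Rightarrow> real \<Rightarrow> real \<Rightarrow> real \<Rightarrow> real \<Rightarrow> real" where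
  "flux_u \<epsilon> \<alpha> n D chi u ux uxxx vx =
     - \<epsilon> * (u ^ 4 / (u powr (4 - n) + \<epsilon>) * uxxx)
     + \<epsilon> powr (\<alpha> / 2) * (u powr (- \<alpha>) * ux) + D * ux
     - chi * (u powr (5 - n) / (u powr (4 - n) + \<epsilon>) * vx)"

definition flux_v :: "real \<Rightarrow> real \<Rightarrow> real \<Rightarrow> real \<Rightarrow> real \<Rightarrow> real \<Rightarrow> real \<Rightarrow> real \<Rightarrow> real \<Rightarrow> real" where
  "flux_v \<epsilon> \<alpha> n D chi v vx vxxx ux =
     - \<epsilon> * (v ^ 4 / (v powr (4 - n) + \<epsilon>) * vxxx)
     + \<epsilon> powr (\<alpha> / 2) * (v powr (- \<alpha>) * vx) + D * vx
     + chi * (v powr (5 - n) / (v powr (4 - n) + \<epsilon>) * ux)"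

text \<open>U k x t, V k x t are the k-th x-derivatives (k \<le> 4), Ut, Vt the time derivatives.\<close>
definition approx_sol ::
  "real \<Rightarrow> real \<Rightarrow> real \<Rightarrow> real \<Rightarrow> real \<Rightarrow> real \<Rightarrow> real \<Rightarrow> real \<Rightarrow> real \<Rightarrow> real \<Rightarrow> real \<Rightarrow> real \<Rightarrow> real \<Rightarrow>
   real \<Rightarrow> (real \<Rightarrow> real) \<Rightarrow> (real \<Rightarrow> real) \<Rightarrow> ereal \<Rightarrow>
   (nat \<Rightarrow> real \<Rightarrow> real \<Rightarrow> real) \<Rightarrow> (real \<Rightarrow> real \<Rightarrow> real) \<Rightarrow>
   (nat \<Rightarrow> real \<Rightarrow> real \<Rightarrow> real) \<Rightarrow> (real \<Rightarrow> real \<Rightarrow> real) \<Rightarrow> bool" where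
  "approx_sol xa xb D1 D2 a1 a2 lam1 lam2 chi1 chi2 \<alpha> n1 n2 \<epsilon> U0 V0 T U Ut V Vt \<longleftrightarrow>
    T > 0 \<and>
    \<comment> \<open>positivity on closure of Omega times [0,T)\<close>
    (\<forall>x\<in>{xa..xb}. \<forall>t\<in>tcl T. U 0 x t > 0 \<and> V 0 x t > 0) \<and>
    \<comment> \<open>initial data\<close>
    (\<forall>x\<in>{xa..xb}. U 0 x 0 = U0 x \<and> V 0 x 0 = V0 x) \<and>
    \<comment> \<open>first x-derivative exists on [0,T) (W^{s,2}, s>3/2, slices are C^1)\<close>
    (\<forall>t\<in>tcl T. \<forall>x\<in>{xa..xb}.
        ((\<lambda>y. U 0 y t) has_real_derivative U 1 x t) (at x within {xa..xb}) \<and>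
        ((\<lambda>y. V 0 y t) has_real_derivative V 1 x t) (at x within {xa..xb})) \<and>
    \<comment> \<open>C^{4,1}(closure Omega times (0,T))\<close>
    (\<forall>t\<in>tpos T. \<forall>x\<in>{xa..xb}. \<forall>j<4.
        ((\<lambda>y. U j y t) has_real_derivative U (Suc j) x t) (at x within {xa..xb}) \<and>
        ((\<lambda>y. V j y t) has_real_derivative V (Suc j) x t) (at x within {xa..xb})) \<and>
    (\<forall>t\<in>tpos T. \<forall>x\<in>{xa..xb}.
        ((\<lambda>s. U 0 x s) has_real_derivative Ut x t) (at t) \<and>
        ((\<lambda>s. V 0 x s) has_real_derivative Vt x t) (at t)) \<and>
    (\<forall>j\<le>4. continuous_on ({xa..xb} \<times> tpos T) (\<lambda>(x, t). U j x t) \<and>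
             continuous_on ({xa..xb} \<times> tpos T) (\<lambda>(x, t). V j x t)) \<and>
    continuous_on ({xa..xb} \<times> tpos T) (\<lambda>(x, t). Ut x t) \<and>
    continuous_on ({xa..xb} \<times> tpos T) (\<lambda>(x, t). Vt x t) \<and>
    \<comment> \<open>C^0([0,T); W^{s,2}) for every s in (3/2,2)\<close>
    (\<forall>s. 3/2 < s \<and> s < 2 \<longrightarrow>
       (\<forall>t\<in>tcl T. Ws_sq xa xb s (\<lambda>x. U 0 x t) (\<lambda>x. U 1 x t) < \<infinity> \<and>
                  Ws_sq xa xb s (\<lambda>x. V 0 x t) (\<lambda>x. V 1 x t) < \<infinity>) \<and>
       (\<forall>t0\<in>tcl T.
          ((\<lambda>t. Ws_sq xa xb s (\<lambda>x. U 0 x t - U 0 x t0) (\<lambda>x. U 1 x t - U 1 x t0))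
              \<longlongrightarrow> 0) (at t0 within tcl T) \<and>
          ((\<lambda>t. Ws_sq xa xb s (\<lambda>x. V 0 x t - V 0 x t0) (\<lambda>x. V 1 x t - V 1 x t0))
              \<longlongrightarrow> 0) (at t0 within tcl T))) \<and>
    \<comment> \<open>the PDEs in Omega times (0,T)\<close>
    (\<forall>t\<in>tpos T. \<forall>x\<in>{xa<..<xb}.
       ((\<lambda>y. flux_u \<epsilon> \<alpha> n1 D1 chi1 (U 0 y t) (U 1 y t) (U 3 y t) (V 1 y t))
          has_real_derivative
          (Ut x t - 3 * (U 0 x t) ^ 3 / (3 * (U 0 x t)\<^sup>2 + \<epsilon>) * (lam1 - U 0 x t + a1 * V 0 x t))) (at x) \<and>
       ((\<lambda>y. flux_v \<epsilon> \<alpha> n2 D2 chi2 (V 0 y t) (V 1 y t) (V 3 y t) (U 1 y t))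
          has_real_derivative
          (Vt x t - 3 * (V 0 x t) ^ 3 / (3 * (V 0 x t)\<^sup>2 + \<epsilon>) * (lam2 - V 0 x t - a2 * U 0 x t))) (at x)) \<and>
    \<comment> \<open>boundary conditions\<close>
    (\<forall>t\<in>tpos T. \<forall>x\<in>{xa, xb}.
       U 1 x t = 0 \<and> U 3 x t = 0 \<and> V 1 x t = 0 \<and> V 3 x t = 0) \<and>
    \<comment> \<open>maximality (extensibility criterion)\<close>
    (T = \<infinity> \<or>
     Limsup (at_left (real_of_ereal T))
       (\<lambda>t. ereal (sqrt ((LBINT x=xa..xb. (U 0 x t)\<^sup>2) + (LBINT x=xa..xb. (U 1 x t)\<^sup>2)
                         + (LBINT x=xa..xb. (U 2 x t)\<^sup>2))
                 + Sup ((\<lambda>x. 1 / U 0 x t) ` {xa..xb})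
                 + sqrt ((LBINT x=xa..xb. (V 0 x t)\<^sup>2) + (LBINT x=xa..xb. (V 1 x t)\<^sup>2)
                         + (LBINT x=xa..xb. (V 2 x t)\<^sup>2))
                 + Sup ((\<lambda>x. 1 / V 0 x t) ` {xa..xb}))) = \<infinity>)"

end

theory Submission
  imports Defs "HOL-Real_Asymp.Real_Asymp"
begin


lemma fbounds:
  fixes u e :: real
  assumes u: "u > 0" and e: "0 < e" "e < 1"
  shows "0 < 3 * u^3/(3 * u\<^sup>2+e)" "3 * u^3/(3 * u\<^sup>2+e) \<le> u"
        "u - 1/(2 * sqrt 3) \<le> 3 * u^3/(3 * u\<^sup>2+e)"
proof -
  have d: "3 * u\<^sup>2+e > 0" using u e by (simp add: add_pos_pos)
  show "0 < 3 * u^3/(3 * u\<^sup>2+e)" using d u by simp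
  show "3 * u^3/(3 * u\<^sup>2+e) \<le> u" using d u e
    by (simp add: divide_simps power2_eq_square power3_eq_cube) 
  define s where "s = sqrt 3"
  have s: "s > 0" "s * s = 3" unfolding s_def by auto
  have key: "e * u \<le> (3 * u\<^sup>2+e) / (2 * s)"
  proof -
    have "0 \<le> (s * u - e)\<^sup>2 + e - e\<^sup>2" using e by (smt (verit) power2_eq_square mult_left_le_one_le zero_le_power2)
    also have "\<dots> = 3 * u\<^sup>2 + e - 2 * s * e * u" using s by (simp add: power2_eq_square algebra_simps)
    finally have "2 * s * (e * u) \<le> 3 * u\<^sup>2+e" by (simp add: algebra_simps)
    thus ?thesis using s by (simp add: field_simps)
  qed
  have "u - 3 * u^3/(3 * u\<^sup>2+e) = e * u/(3 * u\<^sup>2+e)" using d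
    by (simp add: field_simps power2_eq_square power3_eq_cube)
  also have "\<dots> \<le> 1/(2 * s)" using key d s by (simp add: divide_simps)
  finally show "u - 1/(2 * sqrt 3) \<le> 3 * u^3/(3 * u\<^sup>2+e)" unfolding s_def by simp
qed

lemma react:
  fixes u v e a1 a2 l1 l2 M :: real
  assumes u: "u > 0" and v: "v > 0" and e: "0 < e" "e < 1" and a: "a1 > 0" "a2 > 0"
    and l: "l1 > 0" "l2 > 0" and M: "M = max (a1\<^sup>2) 1"
  shows "3 * u^3/(3 * u\<^sup>2+e) * (l1 - u + a1 * v) + M * (3 * v^3/(3 * v\<^sup>2+e) * (l2 - v - a2 * u)) + u + M * v
    \<le> (l1 + 1/(2 * sqrt 3) + 1)\<^sup>2/2 + M * (l2 + 1/(2 * sqrt 3) + 1)\<^sup>2/2"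
proof -
  define c where "c = 1/(2 * sqrt 3)"
  define f where "f = 3 * u^3/(3 * u\<^sup>2+e)"
  define g where "g = 3 * v^3/(3 * v\<^sup>2+e)"
  have f: "0 < f" "f \<le> u" "u - c \<le> f" using fbounds[OF u e] unfolding f_def c_def by auto
  have g: "0 < g" "g \<le> v" "v - c \<le> g" using fbounds[OF v e] unfolding g_def c_def by auto
  have M1: "M \<ge> 1" "M \<ge> a1\<^sup>2" using M by auto
  have c0: "c > 0" unfolding c_def by simp
  have A: "f * (l1 - u + a1 * v) \<le> l1 * u - (u-c) * u + a1 * u * v"
  proof -
    have "f * l1 \<le> u * l1" using f l by (simp add: mult_right_mono)
    moreover have "f * u \<ge> (u-c) * u" using f u by (simp add: mult_right_mono)
    moreover have "f * (a1 * v) \<le> u * (a1 * v)" using f a v by (simp add: mult_right_mono)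
    ultimately show ?thesis by (simp add: algebra_simps)
  qed
  have B: "a1 * u * v \<le> u\<^sup>2/2 + M * v\<^sup>2/2"
  proof -
    have "0 \<le> (u - a1 * v)\<^sup>2" by simp
    hence "a1 * u * v \<le> u\<^sup>2/2 + a1\<^sup>2 * v\<^sup>2/2" by (simp add: power2_eq_square algebra_simps)
    moreover have "a1\<^sup>2 * v\<^sup>2 \<le> M * v\<^sup>2" using M1 by (simp add: mult_right_mono)
    ultimately show ?thesis by simp
  qed
  have C: "g * (l2 - v - a2 * u) \<le> l2 * v - (v-c) * v"
  proof -
    have "g * l2 \<le> v * l2" using g l by (simp add: mult_right_mono)
    moreover have "g * v \<ge> (v-c) * v" using g v by (simp add: mult_right_mono)
    moreover have "g * (a2 * u) \<ge> 0" using g a u by simp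
    ultimately show ?thesis by (simp add: algebra_simps)
  qed
  have C': "M * (g * (l2 - v - a2 * u)) \<le> M * (l2 * v - (v-c) * v)" using C M1 by (simp add: mult_left_mono)
  have D1: "(l1+c+1) * u - u\<^sup>2/2 \<le> (l1+c+1)\<^sup>2/2"
  proof - have "0 \<le> (u - (l1+c+1))\<^sup>2" by simp thus ?thesis by (simp add: power2_eq_square algebra_simps) qed
  have D2: "(l2+c+1) * v - v\<^sup>2/2 \<le> (l2+c+1)\<^sup>2/2"
  proof - have "0 \<le> (v - (l2+c+1))\<^sup>2" by simp thus ?thesis by (simp add: power2_eq_square algebra_simps) qed
  have D2': "M * ((l2+c+1) * v - v\<^sup>2/2) \<le> M * ((l2+c+1)\<^sup>2/2)" using D2 M1 by (simp add: mult_left_mono)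
  have "f * (l1 - u + a1 * v) + M * (g * (l2 - v - a2 * u)) + u + M * v
      \<le> ((l1+c+1) * u - u\<^sup>2/2) + M * ((l2+c+1) * v - v\<^sup>2/2)"
    using A B C' by (simp add: algebra_simps power2_eq_square)
  also have "\<dots> \<le> (l1+c+1)\<^sup>2/2 + M * ((l2+c+1)\<^sup>2/2)" using D1 D2' by simp
  finally show ?thesis unfolding f_def g_def c_def by simp
qed

lemma ode_cmp:
  fixes y y' :: "real \<Rightarrow> real" and C t :: real
  assumes t: "t > 0" and cont: "continuous_on {0..t} y"
    and der: "\<And>s. 0 < s \<Longrightarrow> s < t \<Longrightarrow> (y has_real_derivative y' s) (at s)"
    and le: "\<And>s. 0 < s \<Longrightarrow> s < t \<Longrightarrow> y' s \<le> C - y s"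
  shows "y t \<le> y 0 * exp (-t) + C * (1 - exp (-t))"
proof -
  define z where "z = (\<lambda>s. (y s - C) * exp s)"
  have zc: "continuous_on {0..t} z" unfolding z_def by (intro continuous_intros cont)
  have zd: "(z has_real_derivative (y' s + y s - C) * exp s) (at s)" if "0 < s" "s < t" for s
    unfolding z_def using der[OF that]
    by (auto intro!: derivative_eq_intros simp: algebra_simps)
  obtain l w where w: "0 < w" "w < t" "(z has_real_derivative l) (at w)" "z t - z 0 = (t - 0) * l"
    using MVT[OF t zc] zd by (meson real_differentiable_def)
  have "l = (y' w + y w - C) * exp w" using DERIV_unique[OF w(3) zd[OF w(1,2)]] .
  also have "\<dots> \<le> 0" using le[OF w(1,2)] by (simp add: mult_nonpos_nonneg)
  finally have "z t \<le> z 0" using w(4) t by (simp add: mult_nonneg_nonpos2) (smt (verit) mult_nonneg_nonpos)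
  hence "(y t - C) * exp t \<le> y 0 - C" unfolding z_def by simp
  hence "y t - C \<le> (y 0 - C) * exp (-t)" by (simp add: exp_minus field_simps)
  thus ?thesis by (simp add: algebra_simps)
qed



lemma L2sq_cont:
  assumes "continuous_on {xa..xb} h"
  shows "L2sq xa xb h = ennreal (integral {xa..xb} (\<lambda>x. (h x)\<^sup>2))"
proof -
  have c: "continuous_on {xa..xb} (\<lambda>x. (h x)\<^sup>2)" by (intro continuous_intros assms)
  have "((\<lambda>x. (h x)\<^sup>2) has_integral integral {xa..xb} (\<lambda>x. (h x)\<^sup>2)) {xa..xb}"
    using integrable_continuous_interval[OF c] by (simp add: has_integral_integral)
  from nn_integral_has_integral_lebesgue'[OF _ this]
  show ?thesis unfolding L2sq_def by (simp add: mult.commute)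
qed

lemma abs_young: fixes h d :: real assumes "d > 0" shows "\<bar>h\<bar> \<le> d/2 + h\<^sup>2/(2 * d)"
proof -
  have "0 \<le> (\<bar>h\<bar> - d)\<^sup>2" by simp
  hence "2 * d * \<bar>h\<bar> \<le> h\<^sup>2 + d\<^sup>2" by (simp add: power2_eq_square algebra_simps)
  thus ?thesis using assms by (simp add: field_simps power2_eq_square)
qed

lemma L2_int_tendsto:
  fixes h :: "'a \<Rightarrow> real \<Rightarrow> real"
  assumes ab: "xa < xb" and ev: "eventually (\<lambda>s. continuous_on {xa..xb} (h s)) F"
    and lim: "((\<lambda>s. L2sq xa xb (h s)) \<longlongrightarrow> 0) F"
  shows "((\<lambda>s. integral {xa..xb} (h s)) \<longlongrightarrow> 0) F"
proof (rule tendstoI)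
  fix e :: real assume e: "e > 0"
  define L where "L = xb - xa"
  have L: "L > 0" using ab L_def by simp
  define d where "d = e / L"
  have d: "d > 0" using e L d_def by simp
  define \<eta> where "\<eta> = d * e"
  have eta: "\<eta> > 0" using d e \<eta>_def by simp
  have "eventually (\<lambda>s. L2sq xa xb (h s) < ennreal \<eta>) F"
    using order_tendstoD(2)[OF lim, of "ennreal \<eta>"] eta by simp
  with ev show "eventually (\<lambda>s. dist (integral {xa..xb} (h s)) 0 < e) F"
  proof eventually_elim
    case (elim s)
    have c: "continuous_on {xa..xb} (h s)" using elim by simp
    have c2: "continuous_on {xa..xb} (\<lambda>x. (h s x)\<^sup>2)" by (intro continuous_intros c)
    have nn: "integral {xa..xb} (\<lambda>x. (h s x)\<^sup>2) \<ge> 0" by (intro integral_nonneg integrable_continuous_interval c2) simp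
    have "ennreal (integral {xa..xb} (\<lambda>x. (h s x)\<^sup>2)) < ennreal \<eta>"
      using elim L2sq_cont[OF c] by simp
    hence I2: "integral {xa..xb} (\<lambda>x. (h s x)\<^sup>2) < \<eta>" using nn by (simp add: ennreal_less_iff)
    have i1: "h s integrable_on {xa..xb}" by (intro integrable_continuous_interval c)
    have i2: "(\<lambda>x. d/2 + (h s x)\<^sup>2/(2 * d)) integrable_on {xa..xb}"
      using d by (intro integrable_continuous_interval continuous_intros c) auto
    have "norm (integral {xa..xb} (h s)) \<le> integral {xa..xb} (\<lambda>x. d/2 + (h s x)\<^sup>2/(2 * d))"
      by (rule integral_norm_bound_integral[OF i1 i2]) (use abs_young[OF d] in auto)
    also have "\<dots> = d/2 * L + integral {xa..xb} (\<lambda>x. (h s x)\<^sup>2) / (2 * d)"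
      using ab integrable_continuous_interval[OF c2] unfolding L_def
      by (subst integral_add) (auto simp: integral_divide integrable_on_divide)
    also have "\<dots> < d/2 * L + \<eta> / (2 * d)" using I2 d by (simp add: divide_strict_right_mono)
    also have "\<dots> = e" unfolding \<eta>_def d_def using L e by (simp add: field_simps)
    finally show ?case by simp
  qed
qed



lemma slice:
  assumes "continuous_on (A \<times> B) (\<lambda>(x, t). f x t)" "s \<in> B"
  shows "continuous_on A (\<lambda>x. f x s)"
proof -
  have "continuous_on A (\<lambda>x. (\<lambda>(x, t). f x t) (x, s))"
    by (rule continuous_on_compose2[OF assms(1)]) (use assms(2) in \<open>auto intro!: continuous_intros\<close>)
  thus ?thesis by simp
qed

lemma swapc:
  assumes "continuous_on (A \<times> B) (\<lambda>(x, t). f x t)" "B' \<subseteq> B"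
  shows "continuous_on (B' \<times> A) (\<lambda>(t, x). f x t)"
proof -
  have "continuous_on (B' \<times> A) (\<lambda>p. (\<lambda>(x, t). f x t) (snd p, fst p))"
    by (rule continuous_on_compose2[OF assms(1)]) (use assms(2) in \<open>auto intro!: continuous_intros\<close>)
  thus ?thesis by (simp add: case_prod_beta')
qed

lemma tpos_nbhd:
  assumes "s \<in> tpos T"
  shows "\<exists>d>0. {s-d..s+d} \<subseteq> tpos T"
proof -
  have s: "0 < s" "ereal s < T" using assms by (auto simp: tpos_def)
  obtain r where r: "ereal s < ereal r" "ereal r < T" using ereal_dense2[OF s(2)] by blast
  define d where "d = min s (r - s) / 2"
  have d: "d > 0" using s r by (simp add: d_def)
  have "{s-d..s+d} \<subseteq> tpos T"
  proof
    fix x assume x: "x \<in> {s-d..s+d}"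
    have dd: "d \<le> s/2" "d \<le> (r-s)/2" unfolding d_def by auto
    have "0 < x" using x dd s by auto
    moreover have "x < r" using x dd r by auto
    hence "ereal x < T" using r(2) by (metis ereal_less_eq(3) less_imp_le order_le_less_trans)
    ultimately show "x \<in> tpos T" by (simp add: tpos_def)
  qed
  thus ?thesis using d by blast
qed



lemma den_pos1: "0 < e \<Longrightarrow> 3 * a\<^sup>2 + e \<noteq> (0::real)"
  by (smt (verit) zero_le_power2)
lemma den_pos2: "0 < e \<Longrightarrow> a powr b + e \<noteq> (0::real)"
  by (smt (verit) powr_ge_zero)

lemma single:
  fixes xa xb D1 D2 a1 a2 lam1 lam2 chi1 chi2 \<alpha> n1 n2 \<epsilon> M C :: real
    and U0 V0 :: "real \<Rightarrow> real" and T :: ereal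
    and U V :: "nat \<Rightarrow> real \<Rightarrow> real \<Rightarrow> real" and Ut Vt :: "real \<Rightarrow> real \<Rightarrow> real"
  assumes ab: "xa < xb" and pos: "a1 > 0" "a2 > 0" "lam1 > 0" "lam2 > 0"
    and e: "0 < \<epsilon>" "\<epsilon> < 1"
    and sol: "approx_sol xa xb D1 D2 a1 a2 lam1 lam2 chi1 chi2 \<alpha> n1 n2 \<epsilon> U0 V0 T U Ut V Vt"
    and M: "M = max (a1\<^sup>2) 1"
    and C: "C = (xb - xa) * ((lam1 + 1 / (2 * sqrt 3) + 1)\<^sup>2 / 2 + M * (lam2 + 1 / (2 * sqrt 3) + 1)\<^sup>2 / 2)"
    and t: "0 < t" "ereal t < T"
  shows "integral {xa..xb} (\<lambda>x. U 0 x t) + M * integral {xa..xb} (\<lambda>x. V 0 x t)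
     \<le> (integral {xa..xb} (\<lambda>x. U 0 x 0) + M * integral {xa..xb} (\<lambda>x. V 0 x 0)) * exp (-t)
        + C * (1 - exp (-t))"
proof -
  note S = sol[unfolded approx_sol_def]
  have T0: "T > 0" using S by (rule conjunct1)
  note S2 = S[THEN conjunct2]
  have P: "\<forall>x\<in>{xa..xb}. \<forall>t\<in>tcl T. U 0 x t > 0 \<and> V 0 x t > 0" using S2 by (rule conjunct1)
  note S3 = S2[THEN conjunct2, THEN conjunct2]
  have D0: "\<forall>t\<in>tcl T. \<forall>x\<in>{xa..xb}.
        ((\<lambda>y. U 0 y t) has_real_derivative U 1 x t) (at x within {xa..xb}) \<and>
        ((\<lambda>y. V 0 y t) has_real_derivative V 1 x t) (at x within {xa..xb})" using S3 by (rule conjunct1)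
  note S4 = S3[THEN conjunct2, THEN conjunct2]
  have Dt: "\<forall>t\<in>tpos T. \<forall>x\<in>{xa..xb}.
        ((\<lambda>s. U 0 x s) has_real_derivative Ut x t) (at t) \<and>
        ((\<lambda>s. V 0 x s) has_real_derivative Vt x t) (at t)" using S4 by (rule conjunct1)
  note S5 = S4[THEN conjunct2]
  have CJ: "\<forall>j\<le>4. continuous_on ({xa..xb} \<times> tpos T) (\<lambda>(x, t). U j x t) \<and>
             continuous_on ({xa..xb} \<times> tpos T) (\<lambda>(x, t). V j x t)" using S5 by (rule conjunct1)
  note S6 = S5[THEN conjunct2]
  have CUt: "continuous_on ({xa..xb} \<times> tpos T) (\<lambda>(x, t). Ut x t)" using S6 by (rule conjunct1)
  note S7 = S6[THEN conjunct2]
  have CVt: "continuous_on ({xa..xb} \<times> tpos T) (\<lambda>(x, t). Vt x t)" using S7 by (rule conjunct1)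
  note S8 = S7[THEN conjunct2]
  note WSall = S8[THEN conjunct1]
  have s74: "3/2 < (7/4::real) \<and> (7/4::real) < 2" by simp
  have WS: "\<forall>t0\<in>tcl T.
          ((\<lambda>t. Ws_sq xa xb (7/4) (\<lambda>x. U 0 x t - U 0 x t0) (\<lambda>x. U 1 x t - U 1 x t0))
              \<longlongrightarrow> 0) (at t0 within tcl T) \<and>
          ((\<lambda>t. Ws_sq xa xb (7/4) (\<lambda>x. V 0 x t - V 0 x t0) (\<lambda>x. V 1 x t - V 1 x t0))
              \<longlongrightarrow> 0) (at t0 within tcl T)"
    using WSall[rule_format, OF s74] by (rule conjunct2)
  note S9 = S8[THEN conjunct2]
  have PDE: "\<forall>t\<in>tpos T. \<forall>x\<in>{xa<..<xb}.
       ((\<lambda>y. flux_u \<epsilon> \<alpha> n1 D1 chi1 (U 0 y t) (U 1 y t) (U 3 y t) (V 1 y t))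
          has_real_derivative
          (Ut x t - 3 * (U 0 x t) ^ 3 / (3 * (U 0 x t)\<^sup>2 + \<epsilon>) * (lam1 - U 0 x t + a1 * V 0 x t))) (at x) \<and>
       ((\<lambda>y. flux_v \<epsilon> \<alpha> n2 D2 chi2 (V 0 y t) (V 1 y t) (V 3 y t) (U 1 y t))
          has_real_derivative
          (Vt x t - 3 * (V 0 x t) ^ 3 / (3 * (V 0 x t)\<^sup>2 + \<epsilon>) * (lam2 - V 0 x t - a2 * U 0 x t))) (at x)"
    using S9 by (rule conjunct1)
  have BC: "\<forall>t\<in>tpos T. \<forall>x\<in>{xa, xb}.
       U 1 x t = 0 \<and> U 3 x t = 0 \<and> V 1 x t = 0 \<and> V 3 x t = 0"
    using S9[THEN conjunct2] by (rule conjunct1)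
  have tpos_tcl: "tpos T \<subseteq> tcl T" by (auto simp: tpos_def tcl_def)
  have ttpos: "t \<in> tpos T" using t by (simp add: tpos_def)
  have zero_tcl: "0 \<in> tcl T" using T0 by (simp add: tcl_def zero_ereal_def)
  have cU: "continuous_on {xa..xb} (\<lambda>x. U 0 x s)" "continuous_on {xa..xb} (\<lambda>x. V 0 x s)"
    if "s \<in> tcl T" for s
    using D0 that by (auto simp: continuous_on_eq_continuous_within intro: DERIV_continuous)
  have cJ: "continuous_on {xa..xb} (\<lambda>x. U j x s)" "continuous_on {xa..xb} (\<lambda>x. V j x s)"
    if "s \<in> tpos T" "j \<le> 4" for s j
    using slice[OF CJ[rule_format, OF that(2), THEN conjunct1] that(1)]
      slice[OF CJ[rule_format, OF that(2), THEN conjunct2] that(1)] by auto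
  have cUt: "continuous_on {xa..xb} (\<lambda>x. Ut x s)" "continuous_on {xa..xb} (\<lambda>x. Vt x s)"
    if "s \<in> tpos T" for s
    using slice[OF CUt that] slice[OF CVt that] by auto
  define IU where "IU s = integral {xa..xb} (\<lambda>x. U 0 x s)" for s
  define IV where "IV s = integral {xa..xb} (\<lambda>x. V 0 x s)" for s
  define y where "y s = IU s + M * IV s" for s
  define y' where "y' s = integral {xa..xb} (\<lambda>x. Ut x s) + M * integral {xa..xb} (\<lambda>x. Vt x s)" for s
  have dIU: "(IU has_real_derivative integral {xa..xb} (\<lambda>x. Ut x s)) (at s)"
    if sT: "s \<in> tpos T" for s
  proof -
    obtain d where d: "d > 0" "{s-d..s+d} \<subseteq> tpos T" using tpos_nbhd[OF sT] by blast
    have sint: "s \<in> interior {s-d..s+d}" using d by auto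
    have cont: "continuous_on ({s-d..s+d} \<times> cbox xa xb) (\<lambda>(t, x). Ut x t)"
      using swapc[OF CUt d(2)] by (simp add: cbox_interval)
    have "((\<lambda>s. integral (cbox xa xb) (\<lambda>x. U 0 x s)) has_field_derivative
            integral (cbox xa xb) (\<lambda>x. Ut x s)) (at s within {s-d..s+d})"
    proof (rule leibniz_rule_field_derivative[where f="\<lambda>s x. U 0 x s" and fx="\<lambda>s x. Ut x s", OF _ _ cont])
      fix x r assume "x \<in> {s-d..s+d}" "r \<in> cbox xa xb"
      hence "x \<in> tpos T" "r \<in> {xa..xb}" using d(2) by (auto simp: cbox_interval)
      from Dt[rule_format, OF this, THEN conjunct1]
      show "((\<lambda>x. U 0 r x) has_field_derivative Ut r x) (at x within {s-d..s+d})"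
        by (rule has_field_derivative_at_within)
    next
      fix x assume "x \<in> {s-d..s+d}"
      hence "x \<in> tcl T" using d(2) tpos_tcl by auto
      thus "(\<lambda>r. U 0 r x) integrable_on cbox xa xb"
        unfolding cbox_interval by (rule integrable_continuous_interval[OF cU(1)])
    qed (use d in auto)
    thus ?thesis unfolding at_within_interior[OF sint] IU_def cbox_interval .
  qed
  have dIV: "(IV has_real_derivative integral {xa..xb} (\<lambda>x. Vt x s)) (at s)"
    if sT: "s \<in> tpos T" for s
  proof -
    obtain d where d: "d > 0" "{s-d..s+d} \<subseteq> tpos T" using tpos_nbhd[OF sT] by blast
    have sint: "s \<in> interior {s-d..s+d}" using d by auto
    have cont: "continuous_on ({s-d..s+d} \<times> cbox xa xb) (\<lambda>(t, x). Vt x t)"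
      using swapc[OF CVt d(2)] by (simp add: cbox_interval)
    have "((\<lambda>s. integral (cbox xa xb) (\<lambda>x. V 0 x s)) has_field_derivative
            integral (cbox xa xb) (\<lambda>x. Vt x s)) (at s within {s-d..s+d})"
    proof (rule leibniz_rule_field_derivative[where f="\<lambda>s x. V 0 x s" and fx="\<lambda>s x. Vt x s", OF _ _ cont])
      fix x r assume "x \<in> {s-d..s+d}" "r \<in> cbox xa xb"
      hence "x \<in> tpos T" "r \<in> {xa..xb}" using d(2) by (auto simp: cbox_interval)
      from Dt[rule_format, OF this, THEN conjunct2]
      show "((\<lambda>x. V 0 r x) has_field_derivative Vt r x) (at x within {s-d..s+d})"
        by (rule has_field_derivative_at_within)
    next
      fix x assume "x \<in> {s-d..s+d}"
      hence "x \<in> tcl T" using d(2) tpos_tcl by auto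
      thus "(\<lambda>r. V 0 r x) integrable_on cbox xa xb"
        unfolding cbox_interval by (rule integrable_continuous_interval[OF cU(2)])
    qed (use d in auto)
    thus ?thesis unfolding at_within_interior[OF sint] IV_def cbox_interval .
  qed
  define R1 where "R1 x s = 3 * (U 0 x s) ^ 3 / (3 * (U 0 x s)\<^sup>2 + \<epsilon>) * (lam1 - U 0 x s + a1 * V 0 x s)" for x s
  define R2 where "R2 x s = 3 * (V 0 x s) ^ 3 / (3 * (V 0 x s)\<^sup>2 + \<epsilon>) * (lam2 - V 0 x s - a2 * U 0 x s)" for x s
  have posU: "U 0 x s > 0" "V 0 x s > 0" if "s \<in> tpos T" "x \<in> {xa..xb}" for x s
    using P that tpos_tcl by auto
  have cR: "continuous_on {xa..xb} (\<lambda>x. R1 x s)" "continuous_on {xa..xb} (\<lambda>x. R2 x s)"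
    if sT: "s \<in> tpos T" for s
  proof -
    have d1: "\<forall>x\<in>{xa..xb}. 3 * (U 0 x s)\<^sup>2 + \<epsilon> \<noteq> 0" using e den_pos1 by auto
    have d2: "\<forall>x\<in>{xa..xb}. 3 * (V 0 x s)\<^sup>2 + \<epsilon> \<noteq> 0" using e den_pos1 by auto
    show "continuous_on {xa..xb} (\<lambda>x. R1 x s)" unfolding R1_def
      using d1 cU[of s] sT tpos_tcl by (intro continuous_intros) auto
    show "continuous_on {xa..xb} (\<lambda>x. R2 x s)" unfolding R2_def
      using d2 cU[of s] sT tpos_tcl by (intro continuous_intros) auto
  qed
  have ftcU: "integral {xa..xb} (\<lambda>x. Ut x s) = integral {xa..xb} (\<lambda>x. R1 x s)"
    if sT: "s \<in> tpos T" for s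
  proof -
    define F where "F y = flux_u \<epsilon> \<alpha> n1 D1 chi1 (U 0 y s) (U 1 y s) (U 3 y s) (V 1 y s)" for y
    have pp: "\<forall>y\<in>{xa..xb}. U 0 y s powr (4 - n1) + \<epsilon> \<noteq> 0"
      using e den_pos2 by auto
    have pp2: "\<forall>y\<in>{xa..xb}. U 0 y s \<noteq> 0" using posU[OF sT] by (metis less_irrefl)
    have Fc: "continuous_on {xa..xb} F" unfolding F_def flux_u_def
      using pp pp2 cJ[OF sT, of 0] cJ[OF sT, of 1] cJ[OF sT, of 3]
      by (intro continuous_intros) auto
    have "((\<lambda>x. Ut x s - R1 x s) has_integral (F xb - F xa)) {xa..xb}"
    proof (rule fundamental_theorem_of_calculus_interior)
      fix x assume "x \<in> {xa<..<xb}"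
      from PDE[rule_format, OF sT this, THEN conjunct1]
      show "(F has_vector_derivative Ut x s - R1 x s) (at x)"
        unfolding F_def R1_def has_real_derivative_iff_has_vector_derivative .
    qed (use ab Fc in auto)
    moreover have "F xb = 0" "F xa = 0" using BC[rule_format, OF sT] unfolding F_def flux_u_def by auto
    ultimately have "integral {xa..xb} (\<lambda>x. Ut x s - R1 x s) = 0" by (simp add: integral_unique)
    moreover have "integral {xa..xb} (\<lambda>x. Ut x s - R1 x s) = integral {xa..xb} (\<lambda>x. Ut x s) - integral {xa..xb} (\<lambda>x. R1 x s)"
      by (intro integral_diff integrable_continuous_interval cUt[OF sT] cR[OF sT])
    ultimately show ?thesis by simp
  qed
  have ftcV: "integral {xa..xb} (\<lambda>x. Vt x s) = integral {xa..xb} (\<lambda>x. R2 x s)"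
    if sT: "s \<in> tpos T" for s
  proof -
    define F where "F y = flux_v \<epsilon> \<alpha> n2 D2 chi2 (V 0 y s) (V 1 y s) (V 3 y s) (U 1 y s)" for y
    have pp: "\<forall>y\<in>{xa..xb}. V 0 y s powr (4 - n2) + \<epsilon> \<noteq> 0"
      using e den_pos2 by auto
    have pp2: "\<forall>y\<in>{xa..xb}. V 0 y s \<noteq> 0" using posU[OF sT] by (metis less_irrefl)
    have Fc: "continuous_on {xa..xb} F" unfolding F_def flux_v_def
      using pp pp2 cJ[OF sT, of 0] cJ[OF sT, of 1] cJ[OF sT, of 3]
      by (intro continuous_intros) auto
    have "((\<lambda>x. Vt x s - R2 x s) has_integral (F xb - F xa)) {xa..xb}"
    proof (rule fundamental_theorem_of_calculus_interior)
      fix x assume "x \<in> {xa<..<xb}"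
      from PDE[rule_format, OF sT this, THEN conjunct2]
      show "(F has_vector_derivative Vt x s - R2 x s) (at x)"
        unfolding F_def R2_def has_real_derivative_iff_has_vector_derivative .
    qed (use ab Fc in auto)
    moreover have "F xb = 0" "F xa = 0" using BC[rule_format, OF sT] unfolding F_def flux_v_def by auto
    ultimately have "integral {xa..xb} (\<lambda>x. Vt x s - R2 x s) = 0" by (simp add: integral_unique)
    moreover have "integral {xa..xb} (\<lambda>x. Vt x s - R2 x s) = integral {xa..xb} (\<lambda>x. Vt x s) - integral {xa..xb} (\<lambda>x. R2 x s)"
      by (intro integral_diff integrable_continuous_interval cUt[OF sT] cR[OF sT])
    ultimately show ?thesis by simp
  qed
  define C0 where "C0 = (lam1 + 1 / (2 * sqrt 3) + 1)\<^sup>2 / 2 + M * (lam2 + 1 / (2 * sqrt 3) + 1)\<^sup>2 / 2"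
  have CC0: "C = (xb - xa) * C0" unfolding C C0_def by simp
  have dy: "(y has_real_derivative y' s) (at s)" if sT: "s \<in> tpos T" for s
    unfolding y_def[abs_def] y'_def using dIU[OF sT] dIV[OF sT]
    by (auto intro!: derivative_eq_intros)
  have Mne: "M \<noteq> 0" using M by auto
  have y'le: "y' s \<le> C - y s" if sT: "s \<in> tpos T" for s
  proof -
    have iR1: "(\<lambda>x. R1 x s) integrable_on {xa..xb}" and iR2: "(\<lambda>x. R2 x s) integrable_on {xa..xb}"
      using cR[OF sT] by (auto intro: integrable_continuous_interval)
    have iU: "(\<lambda>x. U 0 x s) integrable_on {xa..xb}" and iV: "(\<lambda>x. V 0 x s) integrable_on {xa..xb}"
      using cU[of s] sT tpos_tcl by (auto intro: integrable_continuous_interval)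
    have "y' s = integral {xa..xb} (\<lambda>x. R1 x s + M * R2 x s)"
      unfolding y'_def ftcU[OF sT] ftcV[OF sT] using iR1 iR2
      by (subst integral_add) (auto simp: Mne)
    also have "\<dots> \<le> integral {xa..xb} (\<lambda>x. C0 - U 0 x s - M * V 0 x s)"
    proof (rule integral_le)
      show "(\<lambda>x. R1 x s + M * R2 x s) integrable_on {xa..xb}" using iR1 iR2
        by (intro integrable_add) (auto simp: Mne)
      show "(\<lambda>x. C0 - U 0 x s - M * V 0 x s) integrable_on {xa..xb}" using iU iV
        by (intro integrable_diff) (auto simp: Mne)
      fix x assume x: "x \<in> {xa..xb}"
      show "R1 x s + M * R2 x s \<le> C0 - U 0 x s - M * V 0 x s"
        using react[OF posU[OF sT x] e pos M] unfolding R1_def R2_def C0_def by simp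
    qed
    also have "\<dots> = C0 * (xb - xa) - IU s - M * IV s"
      unfolding IU_def IV_def using iU iV ab
      by (subst integral_diff, auto simp: Mne intro!: integrable_diff, subst integral_diff, auto simp: Mne)
    finally show ?thesis unfolding CC0 y_def by (simp add: algebra_simps)
  qed
  have limI: "((\<lambda>s. integral {xa..xb} (\<lambda>x. W 0 x s)) \<longlongrightarrow> integral {xa..xb} (\<lambda>x. W 0 x 0)) (at 0 within tcl T)"
    if Wc: "\<And>s. s \<in> tcl T \<Longrightarrow> continuous_on {xa..xb} (\<lambda>x. W 0 x s)"
    and WW: "((\<lambda>t. Ws_sq xa xb (7/4) (\<lambda>x. W 0 x t - W 0 x 0) (\<lambda>x. W 1 x t - W 1 x 0))
              \<longlongrightarrow> 0) (at 0 within tcl T)" for W :: "nat \<Rightarrow> real \<Rightarrow> real \<Rightarrow> real"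
  proof -
    have L: "((\<lambda>s. L2sq xa xb (\<lambda>x. W 0 x s - W 0 x 0)) \<longlongrightarrow> 0) (at 0 within tcl T)"
    proof (rule tendsto_sandwich[OF _ _ tendsto_const WW])
      show "\<forall>\<^sub>F s in at 0 within tcl T. 0 \<le> L2sq xa xb (\<lambda>x. W 0 x s - W 0 x 0)" by simp
      show "\<forall>\<^sub>F s in at 0 within tcl T. L2sq xa xb (\<lambda>x. W 0 x s - W 0 x 0)
              \<le> Ws_sq xa xb (7/4) (\<lambda>x. W 0 x s - W 0 x 0) (\<lambda>x. W 1 x s - W 1 x 0)"
        unfolding Ws_sq_def by (intro always_eventually allI) (rule add_increasing2[OF zero_le add_increasing2[OF zero_le order_refl]])
    qed
    have ev: "eventually (\<lambda>s. continuous_on {xa..xb} (\<lambda>x. W 0 x s - W 0 x 0)) (at 0 within tcl T)"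
      unfolding eventually_at_filter
      by (intro always_eventually allI impI continuous_intros Wc zero_tcl) auto
    have lim0: "((\<lambda>s. integral {xa..xb} (\<lambda>x. W 0 x s - W 0 x 0)) \<longlongrightarrow> 0) (at 0 within tcl T)"
      using L2_int_tendsto[OF ab ev L] .
    have ev2: "eventually (\<lambda>s. integral {xa..xb} (\<lambda>x. W 0 x s - W 0 x 0) =
        integral {xa..xb} (\<lambda>x. W 0 x s) - integral {xa..xb} (\<lambda>x. W 0 x 0)) (at 0 within tcl T)"
      unfolding eventually_at_filter
      by (intro always_eventually allI impI integral_diff integrable_continuous_interval Wc zero_tcl) auto
    have "((\<lambda>s. integral {xa..xb} (\<lambda>x. W 0 x s) - integral {xa..xb} (\<lambda>x. W 0 x 0)) \<longlongrightarrow> 0) (at 0 within tcl T)"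
      by (rule Lim_transform_eventually[OF lim0 ev2])
    thus ?thesis by (rule LIM_zero_cancel)
  qed
  have limy: "(y \<longlongrightarrow> y 0) (at 0 within tcl T)"
  proof -
    have "(IU \<longlongrightarrow> IU 0) (at 0 within tcl T)" unfolding IU_def
      by (rule limI[of U]) (use cU(1) WS[rule_format, OF zero_tcl] in \<open>blast+\<close>)
    moreover have "(IV \<longlongrightarrow> IV 0) (at 0 within tcl T)" unfolding IV_def
      by (rule limI[of V]) (use cU(2) WS[rule_format, OF zero_tcl] in \<open>blast+\<close>)
    ultimately show ?thesis unfolding y_def[abs_def] by (intro tendsto_intros)
  qed
  have sub: "{0..t} \<subseteq> tcl T"
  proof
    fix r assume "r \<in> {0..t}"
    hence r0: "0 \<le> r" and "ereal r \<le> ereal t" by auto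
    from r0 le_less_trans[OF this(2) t(2)] have "0 \<le> r" "ereal r < T" by auto
    thus "r \<in> tcl T" by (simp add: tcl_def)
  qed
  have ycont: "continuous_on {0..t} y"
    unfolding continuous_on_eq_continuous_within
  proof
    fix r assume r: "r \<in> {0..t}"
    show "continuous (at r within {0..t}) y"
    proof (cases "r = 0")
      case True
      thus ?thesis unfolding continuous_within using tendsto_within_subset[OF limy sub] by simp
    next
      case False
      hence "r \<in> tpos T" using r sub by (auto simp: tpos_def tcl_def)
      from DERIV_isCont[OF dy[OF this]] show ?thesis by (rule continuous_at_imp_continuous_at_within)
    qed
  qed
  have "y t \<le> y 0 * exp (-t) + C * (1 - exp (-t))"
  proof (rule ode_cmp[OF t(1) ycont])
    fix r assume r: "0 < r" "r < t"
    hence "r \<in> {0..t}" by auto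
    hence "r \<in> tcl T" using sub by blast
    hence rT: "r \<in> tpos T" using r by (auto simp: tpos_def tcl_def)
    show "(y has_real_derivative y' r) (at r)" by (rule dy[OF rT])
    show "y' r \<le> C - y r" by (rule y'le[OF rT])
  qed
  thus ?thesis unfolding y_def IU_def IV_def .
qed



lemma W12_bound:
  fixes xa xb :: real
  assumes W: "W12 xa xb f g" and ab: "xa < xb"
  shows "\<exists>B. \<forall>x\<in>{xa..xb}. f x \<le> B"
proof -
  have sg: "set_integrable lborel {xa..xb} g" using W unfolding W12_def by blast
  have rep: "\<forall>x\<in>{xa..xb}. f x = f xa + (LBINT y=xa..x. g y)" using W unfolding W12_def by blast
  have sa: "set_integrable lborel {xa..xb} (\<lambda>y. \<bar>g y\<bar>)" using set_integrable_abs[OF sg] by simp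
  have ia: "(\<lambda>y. \<bar>g y\<bar>) integrable_on {xa..xb}" using set_borel_integral_eq_integral(1)[OF sa] .
  show ?thesis
  proof (intro exI ballI)
    fix x assume x: "x \<in> {xa..xb}"
    have sub: "{xa..x} \<subseteq> {xa..xb}" using x by auto
    have sgx: "set_integrable lborel {xa..x} g" by (rule set_integrable_subset[OF sg _ sub]) simp
    have sax: "set_integrable lborel {xa..x} (\<lambda>y. \<bar>g y\<bar>)" by (rule set_integrable_subset[OF sa _ sub]) simp
    have "(LBINT y=xa..x. g y) = integral {xa..x} g"
      using x sgx by (intro interval_integral_eq_integral) auto
    also have "\<dots> \<le> integral {xa..x} (\<lambda>y. \<bar>g y\<bar>)"
      by (rule integral_le[OF set_borel_integral_eq_integral(1)[OF sgx] set_borel_integral_eq_integral(1)[OF sax]]) simp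
    also have "\<dots> \<le> integral {xa..xb} (\<lambda>y. \<bar>g y\<bar>)"
      by (rule integral_subset_le[OF sub set_borel_integral_eq_integral(1)[OF sax] ia]) simp
    finally have le: "(LBINT y=xa..x. g y) \<le> integral {xa..xb} (\<lambda>y. \<bar>g y\<bar>)" .
    have "f x = f xa + (LBINT y=xa..x. g y)" using rep x by blast
    with le show "f x \<le> f xa + integral {xa..xb} (\<lambda>y. \<bar>g y\<bar>)" by linarith
  qed
qed

lemma int_bound0:
  fixes xa xb B :: real and h :: "real \<Rightarrow> real"
  assumes ab: "xa < xb" and c: "continuous_on {xa..xb} h" and b: "\<forall>x\<in>{xa<..<xb}. h x \<le> B"
  shows "integral {xa..xb} h \<le> B * (xb - xa)"
proof -
  have "integral {xa..xb} h = integral {xa<..<xb} h" by (metis integral_open_interval_real)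
  also have "\<dots> \<le> integral {xa<..<xb} (\<lambda>x. B)"
    by (rule integral_le) (use integrable_continuous_interval[OF c] b in \<open>auto simp: integrable_on_open_interval_real\<close>)
  also have "\<dots> = integral {xa..xb} (\<lambda>x. B)" by (metis integral_open_interval_real)
  also have "\<dots> = B * (xb - xa)" using ab by simp
  finally show ?thesis .
qed

lemma single2:
  fixes xa xb D1 D2 a1 a2 lam1 lam2 chi1 chi2 \<alpha> n1 n2 \<epsilon> M C BU BV :: real
    and U0 V0 :: "real \<Rightarrow> real" and T :: ereal
    and U V :: "nat \<Rightarrow> real \<Rightarrow> real \<Rightarrow> real" and Ut Vt :: "real \<Rightarrow> real \<Rightarrow> real"
  assumes ab: "xa < xb" and pos: "a1 > 0" "a2 > 0" "lam1 > 0" "lam2 > 0"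
    and e: "0 < \<epsilon>" "\<epsilon> < 1"
    and sol: "approx_sol xa xb D1 D2 a1 a2 lam1 lam2 chi1 chi2 \<alpha> n1 n2 \<epsilon> U0 V0 T U Ut V Vt"
    and M: "M = max (a1\<^sup>2) 1"
    and C: "C = (xb - xa) * ((lam1 + 1 / (2 * sqrt 3) + 1)\<^sup>2 / 2 + M * (lam2 + 1 / (2 * sqrt 3) + 1)\<^sup>2 / 2)"
    and t: "0 < t" "ereal t < T"
    and BU: "\<forall>x\<in>{xa<..<xb}. U 0 x 0 \<le> BU" and BV: "\<forall>x\<in>{xa<..<xb}. V 0 x 0 \<le> BV"
  shows "(LBINT x=xa..xb. U 0 x t) + (LBINT x=xa..xb. V 0 x t)
     \<le> ((BU + M * BV) * (xb - xa)) * exp (-t) + C * (1 - exp (-t))"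
proof -
  note S = sol[unfolded approx_sol_def]
  have T0: "T > 0" using S by (rule conjunct1)
  note S2 = S[THEN conjunct2]
  have P: "\<forall>x\<in>{xa..xb}. \<forall>t\<in>tcl T. U 0 x t > 0 \<and> V 0 x t > 0" using S2 by (rule conjunct1)
  note S3 = S2[THEN conjunct2, THEN conjunct2]
  have D0: "\<forall>t\<in>tcl T. \<forall>x\<in>{xa..xb}.
        ((\<lambda>y. U 0 y t) has_real_derivative U 1 x t) (at x within {xa..xb}) \<and>
        ((\<lambda>y. V 0 y t) has_real_derivative V 1 x t) (at x within {xa..xb})" using S3 by (rule conjunct1)
  have zero_tcl: "0 \<in> tcl T" using T0 by (simp add: tcl_def zero_ereal_def)
  have ttcl: "t \<in> tcl T" using t by (simp add: tcl_def)
  have cU: "continuous_on {xa..xb} (\<lambda>x. U 0 x s)" "continuous_on {xa..xb} (\<lambda>x. V 0 x s)"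
    if "s \<in> tcl T" for s
    using D0 that by (auto simp: continuous_on_eq_continuous_within intro: DERIV_continuous)
  have M1: "M \<ge> 1" using M by auto
  have main: "integral {xa..xb} (\<lambda>x. U 0 x t) + M * integral {xa..xb} (\<lambda>x. V 0 x t)
     \<le> (integral {xa..xb} (\<lambda>x. U 0 x 0) + M * integral {xa..xb} (\<lambda>x. V 0 x 0)) * exp (-t)
        + C * (1 - exp (-t))"
    by (rule single[OF ab pos e sol M C t])
  have b0: "integral {xa..xb} (\<lambda>x. U 0 x 0) + M * integral {xa..xb} (\<lambda>x. V 0 x 0) \<le> (BU + M * BV) * (xb - xa)"
  proof -
    have "integral {xa..xb} (\<lambda>x. U 0 x 0) \<le> BU * (xb - xa)" by (rule int_bound0[OF ab cU(1)[OF zero_tcl] BU])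
    moreover have "integral {xa..xb} (\<lambda>x. V 0 x 0) \<le> BV * (xb - xa)" by (rule int_bound0[OF ab cU(2)[OF zero_tcl] BV])
    hence "M * integral {xa..xb} (\<lambda>x. V 0 x 0) \<le> M * (BV * (xb - xa))" using M1 by (simp add: mult_left_mono)
    ultimately show ?thesis by (simp add: algebra_simps)
  qed
  have b0': "(integral {xa..xb} (\<lambda>x. U 0 x 0) + M * integral {xa..xb} (\<lambda>x. V 0 x 0)) * exp (-t)
     \<le> ((BU + M * BV) * (xb - xa)) * exp (-t)" using b0 by (simp add: mult_right_mono)
  have lU: "(LBINT x=xa..xb. U 0 x t) = integral {xa..xb} (\<lambda>x. U 0 x t)"
    using ab by (intro interval_integral_eq_integral borel_integrable_atLeastAtMost' cU ttcl) auto
  have lV: "(LBINT x=xa..xb. V 0 x t) = integral {xa..xb} (\<lambda>x. V 0 x t)"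
    using ab by (intro interval_integral_eq_integral borel_integrable_atLeastAtMost' cU ttcl) auto
  have nnV: "integral {xa..xb} (\<lambda>x. V 0 x t) \<ge> 0"
    using P ttcl by (intro integral_nonneg integrable_continuous_interval cU ttcl) (auto intro: less_imp_le)
  have "integral {xa..xb} (\<lambda>x. V 0 x t) \<le> M * integral {xa..xb} (\<lambda>x. V 0 x t)"
    using nnV M1 by (simp add: mult_le_cancel_right1 mult_right_mono)
  thus ?thesis unfolding lU lV using main b0' by linarith
qed



theorem lemma2p3:
  fixes xa xb D1 D2 a1 a2 lam1 lam2 chi1 chi2 \<alpha> n1 n2 :: real
    and u0 u0d v0 v0d :: "real \<Rightarrow> real"
    and U0e V0e :: "real \<Rightarrow> nat \<Rightarrow> real \<Rightarrow> real"
    and T :: "real \<Rightarrow> ereal"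
    and U V :: "real \<Rightarrow> nat \<Rightarrow> real \<Rightarrow> real \<Rightarrow> real"
    and Ut Vt :: "real \<Rightarrow> real \<Rightarrow> real \<Rightarrow> real"
  assumes Omega: "xa < xb"
    and pos: "D1 > 0" "D2 > 0" "a1 > 0" "a2 > 0" "lam1 > 0" "lam2 > 0" "chi1 > 0" "chi2 > 0"
    and alpha: "0 < \<alpha>" "\<alpha> \<le> 1/2"
    and n_range: "0 < n1" "n1 < 4" "0 < n2" "n2 < 4"
    \<comment> \<open>(IE)\<close>
    and u0_W12: "W12 xa xb u0 u0d" and v0_W12: "W12 xa xb v0 v0d"
    and u0_pos: "\<forall>x\<in>{xa..xb}. u0 x > 0" and v0_pos: "\<forall>x\<in>{xa..xb}. v0 x > 0"
    and init_C5: "\<forall>\<epsilon>\<in>{0<..<1}. Ck_fam 5 xa xb (U0e \<epsilon>) \<and> Ck_fam 5 xa xb (V0e \<epsilon>)"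
    and init_bc: "\<forall>\<epsilon>\<in>{0<..<1}. \<forall>x\<in>{xa, xb}.
        U0e \<epsilon> 1 x = 0 \<and> U0e \<epsilon> 3 x = 0 \<and> V0e \<epsilon> 1 x = 0 \<and> V0e \<epsilon> 3 x = 0"
    and init_bounds: "\<forall>\<epsilon>\<in>{0<..<1}. \<forall>x\<in>{xa<..<xb}.
        Inf (u0 ` {xa<..<xb}) / 2 \<le> U0e \<epsilon> 0 x \<and> U0e \<epsilon> 0 x \<le> u0 x + 1 \<and>
        Inf (v0 ` {xa<..<xb}) / 2 \<le> V0e \<epsilon> 0 x \<and> V0e \<epsilon> 0 x \<le> v0 x + 1"
    and init_grad: "\<forall>\<epsilon>\<in>{0<..<1}.
        (LBINT x=xa..xb. (U0e \<epsilon> 1 x)\<^sup>2) \<le> (LBINT x=xa..xb. (u0d x)\<^sup>2) + 1 \<and>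
        (LBINT x=xa..xb. (V0e \<epsilon> 1 x)\<^sup>2) \<le> (LBINT x=xa..xb. (v0d x)\<^sup>2) + 1"
    and init_conv: "AE x in lborel. x \<in> {xa<..<xb} \<longrightarrow>
        ((\<lambda>\<epsilon>. U0e \<epsilon> 0 x) \<longlongrightarrow> u0 x) (at_right 0) \<and>
        ((\<lambda>\<epsilon>. V0e \<epsilon> 0 x) \<longlongrightarrow> v0 x) (at_right 0)"
    \<comment> \<open>(u_eps, v_eps): the classical solutions with maximal existence time T eps\<close>
    and sol: "\<forall>\<epsilon>\<in>{0<..<1}. approx_sol xa xb D1 D2 a1 a2 lam1 lam2 chi1 chi2 \<alpha> n1 n2 \<epsilon>
                 (U0e \<epsilon> 0) (V0e \<epsilon> 0) (T \<epsilon>) (U \<epsilon>) (Ut \<epsilon>) (V \<epsilon>) (Vt \<epsilon>)"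
  shows "\<exists>m :: real \<Rightarrow> real.
     bounded (m ` {0<..}) \<and>
     (\<forall>\<epsilon>\<in>{0<..<1}. \<forall>t. 0 < t \<and> ereal t < T \<epsilon> \<longrightarrow>
        (LBINT x=xa..xb. U \<epsilon> 0 x t) + (LBINT x=xa..xb. V \<epsilon> 0 x t) \<le> m t) \<and>
     Limsup at_top (\<lambda>t. ereal (m t)) \<le>
       ereal ((xb - xa) / 2 * (lam1 + 1 / (2 * sqrt 3) + 1 + max (a1\<^sup>2) 1 * a2 / (2 * sqrt 3))\<^sup>2
            + (xb - xa) / 2 * (lam2 + 1 / (2 * sqrt 3) + 1)\<^sup>2 * max (a1\<^sup>2) 1)"
proof -
  define M where "M = max (a1\<^sup>2) 1"
  define C where "C = (xb - xa) * ((lam1 + 1 / (2 * sqrt 3) + 1)\<^sup>2 / 2 + M * (lam2 + 1 / (2 * sqrt 3) + 1)\<^sup>2 / 2)"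
  obtain Bu where Bu: "\<forall>x\<in>{xa..xb}. u0 x \<le> Bu" using W12_bound[OF u0_W12 Omega] by blast
  obtain Bv where Bv: "\<forall>x\<in>{xa..xb}. v0 x \<le> Bv" using W12_bound[OF v0_W12 Omega] by blast
  define Y0 where "Y0 = ((Bu + 1) + M * (Bv + 1)) * (xb - xa)"
  define m where "m t = Y0 * exp (-t) + C" for t
  have M1: "M \<ge> 1" unfolding M_def by auto
  have C0: "C \<ge> 0" unfolding C_def using Omega M1 by (intro mult_nonneg_nonneg add_nonneg_nonneg) auto
  have bnd: "bounded (m ` {0<..})"
    unfolding bounded_iff
  proof (intro exI ballI)
    fix z assume "z \<in> m ` {0<..}"
    then obtain t where t: "t > 0" "z = m t" by auto
    have e1: "exp (-t) \<le> 1" "exp (-t) > 0" using t by auto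
    have "\<bar>Y0 * exp (-t)\<bar> \<le> \<bar>Y0\<bar>" using e1 by (simp add: abs_mult mult_left_le)
    thus "norm z \<le> \<bar>Y0\<bar> + \<bar>C\<bar>" using t unfolding m_def by simp
  qed
  have est: "(LBINT x=xa..xb. U \<epsilon> 0 x t) + (LBINT x=xa..xb. V \<epsilon> 0 x t) \<le> m t"
    if e: "\<epsilon> \<in> {0<..<1}" and t: "0 < t" "ereal t < T \<epsilon>" for \<epsilon> t
  proof -
    have s: "approx_sol xa xb D1 D2 a1 a2 lam1 lam2 chi1 chi2 \<alpha> n1 n2 \<epsilon>
                 (U0e \<epsilon> 0) (V0e \<epsilon> 0) (T \<epsilon>) (U \<epsilon>) (Ut \<epsilon>) (V \<epsilon>) (Vt \<epsilon>)" using sol e by blast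
    have init: "\<forall>x\<in>{xa..xb}. U \<epsilon> 0 x 0 = U0e \<epsilon> 0 x \<and> V \<epsilon> 0 x 0 = V0e \<epsilon> 0 x"
      using s unfolding approx_sol_def by blast
    have BU: "\<forall>x\<in>{xa<..<xb}. U \<epsilon> 0 x 0 \<le> Bu + 1"
    proof
      fix x assume x: "x \<in> {xa<..<xb}"
      hence "U \<epsilon> 0 x 0 = U0e \<epsilon> 0 x" using init by auto
      moreover have "U0e \<epsilon> 0 x \<le> u0 x + 1" using init_bounds e x by blast
      moreover have "u0 x \<le> Bu" using Bu x by auto
      ultimately show "U \<epsilon> 0 x 0 \<le> Bu + 1" by linarith
    qed
    have BV: "\<forall>x\<in>{xa<..<xb}. V \<epsilon> 0 x 0 \<le> Bv + 1"
    proof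
      fix x assume x: "x \<in> {xa<..<xb}"
      hence "V \<epsilon> 0 x 0 = V0e \<epsilon> 0 x" using init by auto
      moreover have "V0e \<epsilon> 0 x \<le> v0 x + 1" using init_bounds e x by blast
      moreover have "v0 x \<le> Bv" using Bv x by auto
      ultimately show "V \<epsilon> 0 x 0 \<le> Bv + 1" by linarith
    qed
    have e01: "0 < \<epsilon>" "\<epsilon> < 1" using e by auto
    have "(LBINT x=xa..xb. U \<epsilon> 0 x t) + (LBINT x=xa..xb. V \<epsilon> 0 x t)
       \<le> (((Bu + 1) + M * (Bv + 1)) * (xb - xa)) * exp (-t) + C * (1 - exp (-t))"
      by (rule single2[OF Omega pos(3,4,5,6) e01 s M_def C_def t BU BV])
    also have "\<dots> \<le> m t" unfolding m_def Y0_def using C0 by (simp add: algebra_simps)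
    finally show ?thesis .
  qed
  have lim: "(m \<longlongrightarrow> C) at_top" unfolding m_def by real_asymp
  have "Limsup at_top (\<lambda>t. ereal (m t)) = ereal C"
    by (rule lim_imp_Limsup) (use lim in \<open>auto simp: lim_ereal\<close>)
  moreover have "C \<le> (xb - xa) / 2 * (lam1 + 1 / (2 * sqrt 3) + 1 + max (a1\<^sup>2) 1 * a2 / (2 * sqrt 3))\<^sup>2
            + (xb - xa) / 2 * (lam2 + 1 / (2 * sqrt 3) + 1)\<^sup>2 * max (a1\<^sup>2) 1"
  proof -
    define A where "A = lam1 + 1 / (2 * sqrt 3) + 1"
    have A0: "A \<ge> 0" unfolding A_def using pos by auto
    have "0 \<le> max (a1\<^sup>2) 1 * a2 / (2 * sqrt 3)" using pos by auto
    hence "A\<^sup>2 \<le> (A + max (a1\<^sup>2) 1 * a2 / (2 * sqrt 3))\<^sup>2" using A0 by (intro power_mono) auto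
    hence "(xb - xa) / 2 * A\<^sup>2 \<le> (xb - xa) / 2 * (A + max (a1\<^sup>2) 1 * a2 / (2 * sqrt 3))\<^sup>2"
      using Omega by (intro mult_left_mono) auto
    thus ?thesis unfolding C_def M_def A_def by (simp add: algebra_simps)
  qed
  ultimately show ?thesis using bnd est by (intro exI[of _ m]) auto
qed

end
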